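(* Let $\vec{\mathcal G}=([n],E)$ be a directed graph with $m=|E|$ edges in which every vertex has at least one outgoing edge and which has at least one directed cycle. For weights $r\in\mathbb R^m$ let $\lambda(r)$ denote the minimum, over all directed cycles $C$ of $\vec{\mathcal G}$, of the mean weight of $C$. Then for every edge $(i,j)\in E$ and every $r_{-ij}\in\mathbb R^{m-1}$, the function $\mathbb R\ni x\mapsto \lambda(x,r_{-ij})$ is continuous, piecewise affine, and has at most $n$ break points.
   Context: The mean weight of a directed cycle is the sum of the weights of its edges divided by its number of edges. For $r\in\mathbb R^m$ and an edge $(i,j)$, $r_{-ij}\in\mathbb R^{m-1}$ is $r$ with the $ij$-th coordinate removed, and $(x,r_{-ij})\in\mathbb R^m$ is $r$ with the $ij$-th coordinate replaced by $x$. *)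

theory Defs
  imports "HOL-Analysis.Analysis"
begin

text \<open>Edge weights r \<in> \<real>^m (m = card E) are represented as a
  function on vertex pairs; only its values on E matter.\<close>

definition is_dcycle :: "(nat \<times> nat) set \<Rightarrow> nat list \<Rightarrow> bool" where
  "is_dcycle E c \<longleftrightarrow> c \<noteq> [] \<and> distinct c \<and>
     (\<forall>t < length c. (c ! t, c ! ((t + 1) mod length c)) \<in> E)"

definition cycle_weight :: "(nat \<times> nat \<Rightarrow> real) \<Rightarrow> nat list \<Rightarrow> real" where
  "cycle_weight r c = (\<Sum>t < length c. r (c ! t, c ! ((t + 1) mod length c)))"

definition cycle_mean :: "(nat \<times> nat \<Rightarrow> real) \<Rightarrow> nat list \<Rightarrow> real" where
  "cycle_mean r c = cycle_weight r c / real (length c)"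

definition min_cycle_mean :: "(nat \<times> nat) set \<Rightarrow> (nat \<times> nat \<Rightarrow> real) \<Rightarrow> real" where
  "min_cycle_mean E r = Min {cycle_mean r c | c. is_dcycle E c}"

definition pw_affine_at_most :: "nat \<Rightarrow> (real \<Rightarrow> real) \<Rightarrow> bool" where
  "pw_affine_at_most N f \<longleftrightarrow> (\<exists>B. finite B \<and> card B \<le> N \<and>
     (\<forall>a b. a < b \<and> {a<..<b} \<inter> B = {} \<longrightarrow>
        (\<exists>c d. \<forall>x \<in> {a<..<b}. f x = c * x + d)))"

end

theory Submission
  imports Defs
begin

lemma pw_mono_N: "pw_affine_at_most N f \<Longrightarrow> N \<le> M \<Longrightarrow> pw_affine_at_most M f"
  unfolding pw_affine_at_most_def by (meson order_trans)

lemma pw_min_step: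
  fixes h :: "real \<Rightarrow> real"
  assumes pw: "pw_affine_at_most N h"
    and mono: "\<And>x y. x < y \<Longrightarrow> h x - (s*x+\<beta>) < h y - (s*y+\<beta>)"
  shows "pw_affine_at_most (Suc N) (\<lambda>x. min (h x) (s*x+\<beta>))"
proof -
  obtain B where B: "finite B" "card B \<le> N"
    "\<And>a b. a < b \<Longrightarrow> {a<..<b} \<inter> B = {} \<Longrightarrow> \<exists>c d. \<forall>x \<in> {a<..<b}. h x = c * x + d"
    using pw unfolding pw_affine_at_most_def by blast
  define P where "P = {x. h x \<le> s*x+\<beta>}"
  have down: "x \<in> P" if "y \<in> P" "x < y" for x y
    using mono[OF that(2)] that(1) unfolding P_def by auto
  show ?thesis
  proof (cases "P = {}")
    case True
    then have "\<And>x. min (h x) (s*x+\<beta>) = s*x+\<beta>" unfolding P_def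
      by (metis (mono_tags) empty_iff mem_Collect_eq min_def nle_le)
    then show ?thesis unfolding pw_affine_at_most_def
      by (intro exI[of _ "{}"]) auto
  next
    case Pne: False
    show ?thesis
    proof (cases "bdd_above P")
      case False
      have "x \<in> P" for x
      proof -
        from False obtain y where "y \<in> P" "y > x"
          unfolding bdd_above_def by (meson not_le)
        then show ?thesis using down by blast
      qed
      then have "\<And>x. min (h x) (s*x+\<beta>) = h x" unfolding P_def by auto
      then show ?thesis unfolding pw_affine_at_most_def using B
        by (intro exI[of _ B]) auto
    next
      case bdd: True
      define x0 where "x0 = Sup P"
      have lt: "x \<in> P" if "x < x0" for x
        using less_cSup_iff[OF Pne bdd] that down unfolding x0_def by blast
      have gt: "x \<notin> P" if "x > x0" for x
        using cSup_upper[OF _ bdd] that unfolding x0_def by fastforce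
      show ?thesis unfolding pw_affine_at_most_def
      proof (intro exI[of _ "insert x0 B"] conjI allI impI)
        show "finite (insert x0 B)" using B by simp
        show "card (insert x0 B) \<le> Suc N"
          using B card_insert_le_m1 by (simp add: card_insert_if)
        fix a b assume ab: "a < b \<and> {a<..<b} \<inter> insert x0 B = {}"
        then have x0n: "x0 \<notin> {a<..<b}" by auto
        show "\<exists>c d. \<forall>x\<in>{a<..<b}. min (h x) (s * x + \<beta>) = c * x + d"
        proof (cases "b \<le> x0")
          case True
          then have "\<And>x. x \<in> {a<..<b} \<Longrightarrow> x \<in> P" using lt by auto
          then have e: "\<And>x. x \<in> {a<..<b} \<Longrightarrow> min (h x) (s*x+\<beta>) = h x"
            unfolding P_def by auto
          from ab have "\<exists>c d. \<forall>x \<in> {a<..<b}. h x = c * x + d" using B(3) by blast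
          then show ?thesis using e by metis
        next
          case False
          then have "x0 \<le> a" using x0n ab by auto
          then have "\<And>x. x \<in> {a<..<b} \<Longrightarrow> x \<notin> P" using gt by auto
          then have "\<And>x. x \<in> {a<..<b} \<Longrightarrow> min (h x) (s*x+\<beta>) = s*x+\<beta>"
            unfolding P_def by (auto simp: min_def)
          then show ?thesis by metis
        qed
      qed
    qed
  qed
qed

lemma Min_shift:
  fixes b :: "'c \<Rightarrow> real"
  assumes "finite C" "C \<noteq> {}"
  shows "Min ((\<lambda>c. s * x + b c) ` C) = s * x + Min (b ` C)"
proof -
  have "mono (\<lambda>y::real. s*x + y)" by (simp add: mono_def)
  from mono_Min_commute[OF this, of "b ` C"] assms
  show ?thesis by (simp add: image_image)
qed

lemma pw_min_lines:
  fixes a b :: "'c \<Rightarrow> real"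
  shows "finite C \<Longrightarrow> C \<noteq> {} \<Longrightarrow>
    pw_affine_at_most (card (a ` C) - 1) (\<lambda>x. Min ((\<lambda>c. a c * x + b c) ` C))"
proof (induction "card (a ` C)" arbitrary: C rule: less_induct)
  case less
  define s0 where "s0 = Min (a ` C)"
  define C1 where "C1 = {c\<in>C. a c = s0}"
  define C2 where "C2 = {c\<in>C. a c \<noteq> s0}"
  have s0in: "s0 \<in> a ` C" unfolding s0_def using less.prems by simp
  have C1ne: "C1 \<noteq> {}" using s0in unfolding C1_def by auto
  have fC1: "finite C1" "finite C2" using less.prems unfolding C1_def C2_def by auto
  have CU: "C = C1 \<union> C2" unfolding C1_def C2_def by auto
  define \<beta> where "\<beta> = Min (b ` C1)"
  have g1: "Min ((\<lambda>c. a c * x + b c) ` C1) = s0 * x + \<beta>" for x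
  proof -
    have "(\<lambda>c. a c * x + b c) ` C1 = (\<lambda>c. s0 * x + b c) ` C1"
      unfolding C1_def by auto
    then show ?thesis using Min_shift[OF fC1(1) C1ne] unfolding \<beta>_def by simp
  qed
  show ?case
  proof (cases "C2 = {}")
    case True
    then have "C = C1" using CU by simp
    then have "\<And>x. Min ((\<lambda>c. a c * x + b c) ` C) = s0 * x + \<beta>" using g1 by simp
    then show ?thesis unfolding pw_affine_at_most_def
      by (intro exI[of _ "{}"]) auto
  next
    case False
    have sub: "a ` C2 \<subset> a ` C"
    proof
      show "a ` C2 \<subseteq> a ` C" unfolding C2_def by auto
      show "a ` C2 \<noteq> a ` C" using s0in unfolding C2_def by force
    qed
    have lt: "card (a ` C2) < card (a ` C)"
      using psubset_card_mono[OF _ sub] less.prems by simp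
    have ge1: "card (a ` C2) \<ge> 1" using False fC1 by (simp add: Suc_leI card_gt_0_iff)
    define h where "h x = Min ((\<lambda>c. a c * x + b c) ` C2)" for x
    have IH: "pw_affine_at_most (card (a ` C2) - 1) h"
      unfolding h_def using less.hyps[OF lt fC1(2) False] .
    have gt: "a c > s0" if "c \<in> C2" for c
    proof -
      have "s0 \<le> a c" unfolding s0_def using that less.prems unfolding C2_def by auto
      then show ?thesis using that unfolding C2_def by auto
    qed
    have mono: "h x - (s0*x+\<beta>) < h y - (s0*y+\<beta>)" if "x < y" for x y
    proof -
      have "h y \<in> (\<lambda>c. a c * y + b c) ` C2"
        unfolding h_def using Min_in[of "(\<lambda>c. a c * y + b c) ` C2"] fC1(2) False by auto
      then obtain c where c: "c \<in> C2" "h y = a c * y + b c" by auto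
      have "h x \<le> a c * x + b c" unfolding h_def using c(1) fC1(2) by simp
      moreover have "(a c - s0) * x < (a c - s0) * y" using gt[OF c(1)] that by simp
      ultimately show ?thesis using c(2) by (simp add: algebra_simps)
    qed
    have eq: "Min ((\<lambda>c. a c * x + b c) ` C) = min (h x) (s0*x+\<beta>)" for x
    proof -
      have "Min ((\<lambda>c. a c * x + b c) ` C) =
          min (Min ((\<lambda>c. a c * x + b c) ` C1)) (Min ((\<lambda>c. a c * x + b c) ` C2))"
        unfolding CU image_Un using fC1 C1ne False by (simp add: Min_Un)
      then show ?thesis using g1 unfolding h_def by simp
    qed
    have "pw_affine_at_most (Suc (card (a ` C2) - 1)) (\<lambda>x. min (h x) (s0*x+\<beta>))"
      by (rule pw_min_step[OF IH mono])
    then have "pw_affine_at_most (card (a ` C) - 1) (\<lambda>x. min (h x) (s0*x+\<beta>))"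
      by (rule pw_mono_N) (use lt ge1 in linarith)
    then show ?thesis using eq by simp
  qed
qed

lemma cont_min_lines:
  fixes a b :: "'c \<Rightarrow> real"
  shows "finite C \<Longrightarrow> C \<noteq> {} \<Longrightarrow>
    continuous_on UNIV (\<lambda>x. Min ((\<lambda>c. a c * x + b c) ` C))"
proof (induction C rule: finite_ne_induct)
  case (singleton c)
  then show ?case by (simp add: continuous_intros)
next
  case (insert c C)
  have "(\<lambda>x. Min ((\<lambda>c. a c * x + b c) ` insert c C)) =
        (\<lambda>x. min (a c * x + b c) (Min ((\<lambda>c. a c * x + b c) ` C)))"
    using insert by (simp add: image_insert)
  then show ?case using insert.IH by (simp only:) (intro continuous_intros)
qed

theorem mainTheorem2:
  fixes n :: nat and E :: "(nat \<times> nat) set"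
  assumes "E \<subseteq> {1..n} \<times> {1..n}"
    and "\<forall>i \<in> {1..n}. \<exists>j. (i, j) \<in> E"
    and "\<exists>c. is_dcycle E c"
  shows "\<forall>i j (r :: nat \<times> nat \<Rightarrow> real). (i, j) \<in> E \<longrightarrow>
           continuous_on UNIV (\<lambda>x. min_cycle_mean E (r((i, j) := x))) \<and>
           pw_affine_at_most n (\<lambda>x. min_cycle_mean E (r((i, j) := x)))"
proof (intro allI impI)
  fix i j and r :: "nat \<times> nat \<Rightarrow> real"
  assume ijE: "(i, j) \<in> E"
  define e where "e = (i, j)"
  define Cyc where "Cyc = {c. is_dcycle E c}"
  define ed where "ed c t = (c ! t, c ! ((t + 1) mod length c))" for c :: "nat list" and t
  have setc: "set c \<subseteq> {1..n}" if "is_dcycle E c" for c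
  proof
    fix v assume "v \<in> set c"
    then obtain t where t: "t < length c" "c ! t = v" by (auto simp: in_set_conv_nth)
    then have "(c ! t, c ! ((t + 1) mod length c)) \<in> E" using that unfolding is_dcycle_def by blast
    then show "v \<in> {1..n}" using assms(1) t by auto
  qed
  have lenc: "length c \<le> n" "distinct c" "c \<noteq> []" if "is_dcycle E c" for c
  proof -
    show "distinct c" "c \<noteq> []" using that unfolding is_dcycle_def by auto
    have "length c = card (set c)" using \<open>distinct c\<close> by (simp add: distinct_card)
    also have "\<dots> \<le> card {1..n}" using setc[OF that] by (intro card_mono) auto
    finally show "length c \<le> n" by simp
  qed
  have finC: "finite Cyc"
    by (rule finite_subset[OF _ finite_lists_length_le[of "{1..n}" n]])
       (use setc lenc in \<open>auto simp: Cyc_def\<close>)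
  have neC: "Cyc \<noteq> {}" using assms(3) unfolding Cyc_def by auto
  define a where "a c = (\<Sum>t<length c. if ed c t = e then 1 else 0) / real (length c)" for c
  define b where "b c = cycle_mean (r(e := 0)) c" for c
  have lin: "cycle_mean (r(e := x)) c = a c * x + b c" for c x
  proof -
    have "cycle_weight (r(e := x)) c =
        (\<Sum>t<length c. (if ed c t = e then 1 else 0) * x + (r(e:=0)) (ed c t))"
      unfolding cycle_weight_def ed_def by (intro sum.cong) auto
    also have "\<dots> = (\<Sum>t<length c. if ed c t = e then 1 else 0) * x + cycle_weight (r(e:=0)) c"
      unfolding cycle_weight_def ed_def by (simp add: sum.distrib sum_distrib_right)
    finally show ?thesis unfolding cycle_mean_def a_def b_def by (simp add: add_divide_distrib)
  qed
  have cnt: "(\<Sum>t<length c. if ed c t = e then 1 else (0::real)) \<in> {0, 1}" if "c \<in> Cyc" for c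
  proof (cases "\<exists>t0<length c. ed c t0 = e")
    case True
    then obtain t0 where t0: "t0 < length c" "ed c t0 = e" by blast
    have d: "distinct c" using lenc that unfolding Cyc_def by auto
    have "(\<Sum>t<length c. if ed c t = e then 1 else (0::real)) =
          (\<Sum>t<length c. if t = t0 then 1 else 0)"
    proof (intro sum.cong refl)
      fix t assume "t \<in> {..<length c}"
      then have "ed c t = e \<longleftrightarrow> t = t0"
        using t0 d nth_eq_iff_index_eq[OF d] unfolding ed_def by auto
      then show "(if ed c t = e then 1 else (0::real)) = (if t = t0 then 1 else 0)" by simp
    qed
    also have "\<dots> = 1" using t0 by simp
    finally show ?thesis by simp
  next
    case False
    then have "(\<Sum>t<length c. if ed c t = e then 1 else (0::real)) = 0"
      by (intro sum.neutral) auto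
    then show ?thesis by simp
  qed
  define S where "S = insert (0::real) ((\<lambda>k. 1 / real k) ` {1..n})"
  have aS: "a ` Cyc \<subseteq> S"
  proof
    fix y assume "y \<in> a ` Cyc"
    then obtain c where c: "c \<in> Cyc" "y = a c" by auto
    have l: "length c \<in> {1..n}" using lenc c(1) unfolding Cyc_def by (auto simp: Suc_le_eq)
    from cnt[OF c(1)] show "y \<in> S" unfolding S_def c(2) a_def using l by auto
  qed
  have cardS: "card (a ` Cyc) \<le> Suc n"
  proof -
    have "card (a ` Cyc) \<le> card S" by (rule card_mono) (simp add: S_def, rule aS)
    also have "\<dots> \<le> Suc (card ((\<lambda>k. 1 / real k) ` {1..n}))"
      unfolding S_def by (simp add: card_insert_if)
    also have "\<dots> \<le> Suc n" using card_image_le[of "{1..n}" "\<lambda>k. 1 / real k"] by simp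
    finally show ?thesis .
  qed
  have fe: "(\<lambda>x. min_cycle_mean E (r((i, j) := x))) = (\<lambda>x. Min ((\<lambda>c. a c * x + b c) ` Cyc))"
    unfolding min_cycle_mean_def e_def[symmetric] Cyc_def
    by (rule ext, rule arg_cong[where f=Min]) (auto simp: lin)
  show "continuous_on UNIV (\<lambda>x. min_cycle_mean E (r((i, j) := x))) \<and>
           pw_affine_at_most n (\<lambda>x. min_cycle_mean E (r((i, j) := x)))"
    unfolding fe
    using cont_min_lines[OF finC neC] pw_mono_N[OF pw_min_lines[OF finC neC]] cardS by simp
qed

end
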